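(* Let $p$ be an odd prime and $r\ge2$ even. Then $D_{S(p^r)^*}\le5$.
   Context: For a natural number $m$, $\mathbb Z_m=\mathbb Z/m\mathbb Z$, $S(m)=\{x^2:x\in\mathbb Z_m\}$, $S(m)^*=S(m)\setminus\{0\}$. For $A\subseteq\mathbb Z_m$, a sequence $(y_1,\dots,y_t)$ ($t\ge1$) is an $A$-weighted zero-sum sequence if there exist $a_i\in A$ with $\sum a_iy_i=0$; a sequence has an $A$-weighted zero-sum subsequence if some nonempty subsequence is one. $D_A(m)$ is the least positive integer $t$ such that every sequence of length $t$ in $\mathbb Z_m$ has an $A$-weighted zero-sum subsequence; $D_{S(m)^*}=D_{S(m)^*}(m)$. *)

theory Defs
  imports "HOL-Computational_Algebra.Primes"
begin

text \<open>Z_m is represented by the residues {0..<m} (natural numbers), arithmetic mod m.\<close>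

definition sq_set :: "nat \<Rightarrow> nat set" where
  "sq_set m = {(x * x) mod m | x. x < m}"

definition sq_set_star :: "nat \<Rightarrow> nat set" where
  "sq_set_star m = sq_set m - {0}"

definition has_wzs_subseq :: "nat set \<Rightarrow> nat \<Rightarrow> nat list \<Rightarrow> bool" where
  "has_wzs_subseq A m ys \<longleftrightarrow>
     (\<exists>I a. I \<subseteq> {..<length ys} \<and> I \<noteq> {} \<and> (\<forall>i\<in>I. a i \<in> A) \<and>
            (\<Sum>i\<in>I. a i * ys ! i) mod m = 0)"

definition davenport_w :: "nat set \<Rightarrow> nat \<Rightarrow> nat" where
  "davenport_w A m = (LEAST t. t \<ge> 1 \<and>
     (\<forall>ys. length ys = t \<and> set ys \<subseteq> {..<m} \<longrightarrow> has_wzs_subseq A m ys))"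

end

theory Submission imports Defs "HOL-Number_Theory.Cong" begin

lemma hensel_step:
  fixes p a b x K :: nat
  assumes p: "prime p" "odd p" and a: "\<not> p dvd a" and x: "\<not> p dvd x" and K: "K \<ge> 1"
    and d: "p^K dvd a*x^2+b"
  shows "\<exists>x'. \<not> p dvd x' \<and> p^(Suc K) dvd a*x'^2+b"
proof -
  obtain q where q: "a*x^2+b = p^K * q" using d by blast
  have "coprime (2*a*x) p"
  proof -
    have "\<not> p dvd 2" using p by (metis primes_dvd_imp_eq two_is_prime_nat even_numeral)
    hence "\<not> p dvd 2*a*x" using p a x by (simp add: prime_dvd_mult_iff)
    thus ?thesis using p by (metis prime_imp_coprime coprime_commute)
  qed
  then obtain c where c: "[2*a*x*c = 1] (mod p)" using coprime_iff_invertible_nat[of "2*a*x" p] by auto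
  define s where "s = c * (p - q mod p)"
  define x' where "x' = x + p^K * s"
  have pK: "p dvd p^K" using K by (simp add: dvd_power)
  obtain k where k: "p^K = p*k" using pK by blast
  have "[x' = x] (mod p)" unfolding x'_def cong_def k by (simp add: mult.assoc)
  hence nx: "\<not> p dvd x'" using x by (metis cong_dvd_iff)
  have "[q + 2*a*x*s = q + 2*a*x*c*(p - q mod p)] (mod p)" by (simp add: s_def mult.assoc)
  moreover have "[q + 2*a*x*c*(p - q mod p) = q + 1*(p - q mod p)] (mod p)"
    by (intro cong_add cong_mult c cong_refl)
  moreover have "[q + 1*(p - q mod p) = 0] (mod p)"
  proof -
    have "q mod p < p" using p by (simp add: prime_gt_0_nat)
    hence "q + (p - q mod p) = q div p * p + p" using div_mult_mod_eq[of q p] by linarith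
    thus ?thesis by (simp add: cong_0_iff)
  qed
  ultimately have "[q + 2*a*x*s = 0] (mod p)" by (meson cong_trans)
  hence "p dvd q + 2*a*x*s" by (simp add: cong_0_iff)
  then obtain w where w: "q + 2*a*x*s = p*w" by blast
  have "a*x'^2+b = (a*x^2+b) + p^K*(2*a*x*s) + (p^K*p^K)*(a*s^2)"
    unfolding x'_def by (simp add: power2_eq_square algebra_simps)
  also have "\<dots> = p^K*(q + 2*a*x*s) + (p^K*p^K)*(a*s^2)" using q by (simp add: algebra_simps)
  also have "\<dots> = p^(Suc K) * w + p^(Suc K) * (p^(K - 1)*(a*s^2))"
  proof -
    have e: "p^K*p^K = p^(Suc K) * p^(K-1)" proof -
      have "K + K = Suc K + (K - 1)" using K by simp
      thus ?thesis by (metis power_add)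
    qed
    show ?thesis by (simp only: w e power_Suc) (simp add: ac_simps)
  qed
  finally have "p^(Suc K) dvd a*x'^2+b" by simp
  thus ?thesis using nx by blast
qed

lemma hensel:
  fixes p a b x0 :: nat
  assumes p: "prime p" "odd p" and a: "\<not> p dvd a" and x: "\<not> p dvd x0"
    and d: "p dvd a*x0^2+b" and K: "K \<ge> 1"
  shows "\<exists>x. \<not> p dvd x \<and> p^K dvd a*x^2+b"
  using K
proof (induction K rule: dec_induct)
  case base thus ?case using x d by auto
next
  case (step n)
  then obtain x where "\<not> p dvd x" "p^n dvd a*x^2+b" by blast
  thus ?case using hensel_step[OF p a _ step(1)] by blast
qed

lemma sq_inj:
  fixes p c x y :: nat
  assumes p: "prime p" "odd p" and c: "\<not> p dvd c"
    and x: "x \<le> (p-1) div 2" and y: "y \<le> (p-1) div 2"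
    and e: "[c*x^2 = c*y^2] (mod p)"
  shows "x = y"
proof -
  have "[int (c*x^2) = int (c*y^2)] (mod int p)" using e cong_int_iff by blast
  hence "int p dvd int c * ((int x - int y) * (int x + int y))"
    by (simp add: cong_iff_dvd_diff power2_eq_square algebra_simps)
  moreover have pp: "prime (int p)" using p by simp
  moreover have "\<not> int p dvd int c" using c by simp
  ultimately have disj: "int p dvd (int x - int y) \<or> int p dvd (int x + int y)"
    by (simp add: prime_dvd_mult_iff)
  have p1: "p \<ge> 1" using p prime_ge_1_nat by blast
  have xy: "x + y < p" using x y p1 by linarith
  from disj show ?thesis
  proof
    assume d: "int p dvd int x - int y"
    have "[int x = int y] (mod int p)" using d by (simp add: cong_iff_dvd_diff)
    hence "[x = y] (mod p)" using cong_int_iff by blast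
    thus ?thesis using xy unfolding cong_def by simp
  next
    assume d: "int p dvd int x + int y"
    hence "p dvd x + y" by (metis of_nat_add of_nat_dvd_iff)
    hence "x + y = 0" using xy by (metis dvd_imp_le not_le neq0_conv)
    thus ?thesis by simp
  qed
qed

lemma neg_mod_inj:
  fixes B B' p :: nat
  assumes "B < p" "B' < p" "(p - B) mod p = (p - B') mod p"
  shows "B = B'"
  using assms by (cases "B=0"; cases "B'=0"; simp)

lemma three_mod_p:
  fixes p u1 u2 u3 :: nat
  assumes p: "prime p" "odd p" and u: "\<not> p dvd u1" "\<not> p dvd u2" "\<not> p dvd u3"
  shows "(\<exists>t. p dvd u1*t^2+u3) \<or> (\<exists>t. p dvd u2*t^2+u3) \<or>
         (\<exists>x y. \<not> p dvd x \<and> \<not> p dvd y \<and> p dvd u1*x^2 + (u2*y^2+u3))"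
proof -
  define h where "h = (p-1) div 2"
  have p0: "p > 0" using p prime_gt_0_nat by blast
  have ph: "2*(h+1) = p+1" using p(2) unfolding h_def by (auto elim!: oddE)
  define f where "f x = (u1*x^2) mod p" for x
  define g where "g y = (p - (u2*y^2+u3) mod p) mod p" for y
  have injf: "inj_on f {..h}"
  proof
    fix x y assume "x \<in> {..h}" "y \<in> {..h}" "f x = f y"
    thus "x = y" using sq_inj[OF p u(1)] unfolding f_def h_def cong_def by auto
  qed
  have injg: "inj_on g {..h}"
  proof
    fix x y assume xy: "x \<in> {..h}" "y \<in> {..h}" and gg: "g x = g y"
    have lt: "(u2*x^2+u3) mod p < p" "(u2*y^2+u3) mod p < p" using p0 by auto
    have "(u2*x^2+u3) mod p = (u2*y^2+u3) mod p"
      using neg_mod_inj[OF lt] gg unfolding g_def by blast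
    hence "[u2*x^2 = u2*y^2] (mod p)" unfolding cong_def[symmetric] by (metis cong_add_rcancel_nat)
    thus "x = y" using sq_inj[OF p u(2)] xy unfolding h_def by auto
  qed
  have cf: "card (f ` {..h}) = h+1" using injf by (simp add: card_image)
  have cg: "card (g ` {..h}) = h+1" using injg by (simp add: card_image)
  have sub: "f ` {..h} \<union> g ` {..h} \<subseteq> {..<p}" unfolding f_def g_def using p0 by auto
  have "f ` {..h} \<inter> g ` {..h} \<noteq> {}"
  proof
    assume dis: "f ` {..h} \<inter> g ` {..h} = {}"
    have "card (f ` {..h} \<union> g ` {..h}) = p+1" using card_Un_disjoint[OF _ _ dis] cf cg ph by simp
    moreover have "card (f ` {..h} \<union> g ` {..h}) \<le> p" using card_mono[OF _ sub] by simp
    ultimately show False by simp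
  qed
  then obtain x y where xh: "x \<le> h" and yh: "y \<le> h" and fg: "f x = g y" by auto
  have "p dvd u1*x^2 + (u2*y^2+u3)"
  proof -
    define A where "A = (u1*x^2) mod p"
    define B where "B = (u2*y^2+u3) mod p"
    have "B < p" using p0 by (simp add: B_def)
    have AB: "A = (p - B) mod p" using fg unfolding f_def g_def A_def B_def by simp
    have "(A + B) mod p = 0"
    proof (cases "B = 0")
      case True thus ?thesis using AB by simp
    next
      case False thus ?thesis using AB \<open>B < p\<close> by simp
    qed
    thus ?thesis unfolding A_def B_def by (metis mod_add_eq mod_0_imp_dvd)
  qed
  have hp: "h < p" using ph by presburger
  have xp: "x < p" "y < p" using xh yh hp by linarith+
  show ?thesis
  proof (cases "x = 0")
    case True
    thus ?thesis using \<open>p dvd u1*x^2 + (u2*y^2+u3)\<close> by auto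
  next
    case False
    hence nx: "\<not> p dvd x" using xp by (meson dvd_imp_le not_le neq0_conv)
    show ?thesis
    proof (cases "y = 0")
      case True
      thus ?thesis using \<open>p dvd u1*x^2 + (u2*y^2+u3)\<close> by auto
    next
      case False
      hence "\<not> p dvd y" using xp by (meson dvd_imp_le not_le neq0_conv)
      thus ?thesis using nx \<open>p dvd u1*x^2 + (u2*y^2+u3)\<close> by blast
    qed
  qed
qed

lemma combine:
  fixes p r V :: nat and ys :: "nat list" and I :: "nat set" and v u c :: "nat \<Rightarrow> nat"
  assumes p: "prime p" and I: "I \<subseteq> {..<length ys}" "I \<noteq> {}"
   and ys: "\<forall>i\<in>I. ys!i = p^(v i) * u i"
   and vV: "\<forall>i\<in>I. v i \<le> V \<and> even (V - v i)" and Vr: "V < r"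
   and c: "\<forall>i\<in>I. \<not> p dvd c i"
   and s: "p^r dvd (\<Sum>i\<in>I. c i^2 * u i)"
  shows "has_wzs_subseq (sq_set_star (p^r)) (p^r) ys"
proof -
  define m where "m = p^r"
  have p2: "p \<ge> 2" using p by (simp add: prime_ge_2_nat)
  have m0: "m > 0" using p2 unfolding m_def by simp
  define e where "e i = (V - v i) div 2" for i
  define z where "z i = (p^(e i) * c i) mod m" for i
  define a where "a i = (z i * z i) mod m" for i
  have ee: "e i + e i + v i = V" if "i \<in> I" for i
  proof -
    have h: "v i \<le> V" "even (V - v i)" using vV that by auto
    from h(2) obtain k where k: "V - v i = 2*k" by (rule evenE)
    show ?thesis using h(1) k unfolding e_def by simp
  qed
  have zc: "[z i = p^(e i) * c i] (mod m)" for i by (simp add: z_def cong_def)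
  have ac: "[a i = (p^(e i) * c i) * (p^(e i) * c i)] (mod m)" for i
  proof -
    have "[a i = z i * z i] (mod m)" by (simp add: a_def cong_def)
    moreover have "[z i * z i = (p^(e i) * c i) * (p^(e i) * c i)] (mod m)"
      using cong_mult[OF zc zc] .
    ultimately show ?thesis by (rule cong_trans)
  qed
  have aS: "a i \<in> sq_set_star m" if "i \<in> I" for i
  proof -
    have "z i < m" using m0 by (simp add: z_def)
    hence "a i \<in> sq_set m" unfolding sq_set_def a_def by blast
    moreover have "a i \<noteq> 0"
    proof
      assume "a i = 0"
      hence "[a i = 0] (mod m)" by simp
      hence "[(p^(e i) * c i) * (p^(e i) * c i) = 0] (mod m)" using cong_trans[OF cong_sym[OF ac]] by blast
      moreover have "(p^(e i) * c i) * (p^(e i) * c i) = p^(e i + e i) * (c i * c i)"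
        by (simp only: power_add) (simp only: ac_simps)
      ultimately have "m dvd p^(e i + e i) * (c i * c i)" by (simp add: cong_0_iff)
      moreover have "coprime m (c i * c i)"
      proof -
        have "coprime p (c i)" using p c that by (simp add: prime_imp_coprime)
        thus ?thesis unfolding m_def by simp
      qed
      ultimately have "m dvd p^(e i + e i)"
        using coprime_dvd_mult_left_iff[of m "c i * c i" "p^(e i+e i)"] by simp
      hence "p^r dvd p^(e i + e i)" unfolding m_def .
      hence "r \<le> e i + e i" using p2 by (simp add: dvd_power_iff_le)
      moreover have "e i + e i \<le> V" using ee[OF that] by simp
      ultimately show False using Vr by simp
    qed
    ultimately show ?thesis unfolding sq_set_star_def by simp
  qed
  have fin: "finite I" using I(1) finite_subset by blast
  have "[(\<Sum>i\<in>I. a i * ys!i) = (\<Sum>i\<in>I. p^V * (c i^2 * u i))] (mod m)"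
  proof (rule cong_sum)
    fix i assume iI: "i \<in> I"
    have "[a i * ys!i = (p^(e i) * c i) * (p^(e i) * c i) * ys!i] (mod m)"
      using cong_mult[OF ac cong_refl] .
    moreover have "(p^(e i) * c i) * (p^(e i) * c i) * ys!i = p^(e i + e i + v i) * (c i^2 * u i)"
    proof -
      have yi: "ys!i = p^(v i) * u i" using ys iI by blast
      show ?thesis unfolding yi power_add power2_eq_square by (simp add: ac_simps)
    qed
    ultimately show "[a i * ys!i = p^V * (c i^2 * u i)] (mod m)" using ee[OF iI] by simp
  qed
  moreover have "m dvd (\<Sum>i\<in>I. p^V * (c i^2 * u i))"
    using s unfolding m_def by (simp add: sum_distrib_left[symmetric])
  hence "(\<Sum>i\<in>I. p^V * (c i^2 * u i)) mod m = 0" by simp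
  ultimately have "(\<Sum>i\<in>I. a i * ys!i) mod m = 0" unfolding cong_def by simp
  thus ?thesis unfolding has_wzs_subseq_def m_def[symmetric]
    apply (intro exI[of _ I] exI[of _ a])
    using I aS by auto
qed

lemma max_par: "even (a::nat) = even b \<Longrightarrow> even (max a b - a) \<and> even (max a b - b)"
  by (cases "a \<le> b") (auto simp: max_def)

lemma core_pair:
  fixes p r :: nat and ys :: "nat list" and v u :: "nat \<Rightarrow> nat"
  assumes p: "prime p" "odd p" and r: "r \<ge> 1"
    and ik: "i < length ys" "k < length ys" "i \<noteq> k"
    and ysi: "ys!i = p^(v i) * u i" and ysk: "ys!k = p^(v k) * u k"
    and u: "\<not> p dvd u i" "\<not> p dvd u k" and vr: "v i < r" "v k < r"
    and par: "even (v i) = even (v k)"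
    and t: "p dvd u i * t^2 + u k"
  shows "has_wzs_subseq (sq_set_star (p^r)) (p^r) ys"
proof -
  have "\<not> p dvd t"
  proof
    assume "p dvd t"
    hence "p dvd u i * t^2" by (metis dvd_mult dvd_mult2 power2_eq_square)
    with t have "p dvd u k" by (simp add: dvd_add_right_iff)
    with u show False by simp
  qed
  from hensel[OF p u(1) this t r] obtain x where x: "\<not> p dvd x" "p^r dvd u i * x^2 + u k" by blast
  define V where "V = max (v i) (v k)"
  define c where "c l = (if l = i then x else 1)" for l
  have pn1: "\<not> p dvd 1" using p by (metis not_prime_unit)
  show ?thesis
  proof (rule combine[OF p(1), where I="{i,k}" and V=V and v=v and u=u and c=c])
    show "{i,k} \<subseteq> {..<length ys}" using ik by auto
    show "{i,k} \<noteq> {}" by simp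
    show "\<forall>l\<in>{i,k}. ys!l = p^(v l) * u l" using ysi ysk by auto
    show "\<forall>l\<in>{i,k}. v l \<le> V \<and> even (V - v l)" using max_par[OF par] unfolding V_def by auto
    show "V < r" using vr unfolding V_def by simp
    show "\<forall>l\<in>{i,k}. \<not> p dvd c l" using x pn1 ik unfolding c_def by auto
    show "p^r dvd (\<Sum>l\<in>{i,k}. c l^2 * u l)" using x ik unfolding c_def by (simp add: ac_simps)
  qed
qed

lemma max3_par: "even (a::nat) = even b \<Longrightarrow> even a = even c \<Longrightarrow>
   (let M = max a (max b c) in even (M - a) \<and> even (M - b) \<and> even (M - c))"
  by (auto simp: max_def Let_def)

lemma core3:
  fixes p r :: nat and ys :: "nat list" and v u :: "nat \<Rightarrow> nat"
  assumes p: "prime p" "odd p" and r: "r \<ge> 1"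
    and ijk: "i < length ys" "j < length ys" "k < length ys" "i \<noteq> j" "i \<noteq> k" "j \<noteq> k"
    and ys: "\<forall>l\<in>{i,j,k}. ys!l = p^(v l) * u l \<and> \<not> p dvd u l \<and> v l < r"
    and par: "even (v i) = even (v j)" "even (v i) = even (v k)"
  shows "has_wzs_subseq (sq_set_star (p^r)) (p^r) ys"
proof -
  have u: "\<not> p dvd u i" "\<not> p dvd u j" "\<not> p dvd u k" using ys by auto
  from three_mod_p[OF p u] consider
      (A) t where "p dvd u i*t^2+u k"
    | (B) t where "p dvd u j*t^2+u k"
    | (C) x y where "\<not> p dvd x" "\<not> p dvd y" "p dvd u i*x^2 + (u j*y^2+u k)" by blast
  thus ?thesis
  proof cases
    case A
    show ?thesis by (rule core_pair[OF p r, of i ys k v u, OF _ _ _ _ _ _ _ _ _ _ A]) (use ijk ys par in auto)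
  next
    case B
    show ?thesis by (rule core_pair[OF p r, of j ys k v u, OF _ _ _ _ _ _ _ _ _ _ B]) (use ijk ys par in auto)
  next
    case (C x y)
    from hensel[OF p u(1) C(1) C(3) r] obtain X where X: "\<not> p dvd X" "p^r dvd u i*X^2 + (u j*y^2+u k)"
      by blast
    define V where "V = max (v i) (max (v j) (v k))"
    define c where "c l = (if l = i then X else if l = j then y else 1)" for l
    have pn1: "\<not> p dvd 1" using p by (metis not_prime_unit)
    show ?thesis
    proof (rule combine[OF p(1), where I="{i,j,k}" and V=V and v=v and u=u and c=c])
      show "{i,j,k} \<subseteq> {..<length ys}" using ijk by auto
      show "{i,j,k} \<noteq> {}" by simp
      show "\<forall>l\<in>{i,j,k}. ys!l = p^(v l) * u l" using ys by auto
      show "\<forall>l\<in>{i,j,k}. v l \<le> V \<and> even (V - v l)" using max3_par[OF par] unfolding V_def Let_def by auto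
      show "V < r" using ys unfolding V_def by simp
      show "\<forall>l\<in>{i,j,k}. \<not> p dvd c l" using X C pn1 ijk unfolding c_def by auto
      show "p^r dvd (\<Sum>l\<in>{i,j,k}. c l^2 * u l)" using X ijk unfolding c_def by (simp add: ac_simps)
    qed
  qed
qed

lemma decomp:
  fixes p y :: nat
  assumes p: "prime p" and y: "y > 0"
  shows "\<exists>v u. y = p^v * u \<and> \<not> p dvd u"
  using y
proof (induction y rule: less_induct)
  case (less y)
  show ?case
  proof (cases "p dvd y")
    case True
    then obtain y' where y': "y = p * y'" by blast
    have p2: "p \<ge> 2" using p by (simp add: prime_ge_2_nat)
    have "y' > 0" using less.prems y' by simp
    moreover have "y' < y" using y' p2 \<open>y' > 0\<close> by simp
    ultimately obtain v u where "y' = p^v * u" "\<not> p dvd u" using less.IH by blast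
    hence "y = p^(Suc v) * u \<and> \<not> p dvd u" using y' by simp
    thus ?thesis by blast
  next
    case False
    hence "y = p^0 * y \<and> \<not> p dvd y" by simp
    thus ?thesis by blast
  qed
qed

lemma three_of_card:
  fixes S :: "nat set"
  assumes "finite S" "card S \<ge> 3"
  shows "\<exists>i j k. i \<in> S \<and> j \<in> S \<and> k \<in> S \<and> i \<noteq> j \<and> i \<noteq> k \<and> j \<noteq> k"
proof -
  have "S \<noteq> {}" using assms by (intro notI) simp
  then obtain i where i: "i \<in> S" by blast
  have "card (S - {i}) \<ge> 2" using assms i by simp
  hence "S - {i} \<noteq> {}" by (intro notI) simp
  then obtain j where j: "j \<in> S - {i}" by blast
  have "card (S - {i} - {j}) \<ge> 1" using assms i j \<open>card (S - {i}) \<ge> 2\<close> by simp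
  hence "S - {i} - {j} \<noteq> {}" by (intro notI) simp
  then obtain k where k: "k \<in> S - {i} - {j}" by blast
  show ?thesis using i j k by blast
qed

theorem mainTheorem14:
  fixes p r :: nat
  assumes "prime p" and "odd p" and "r \<ge> 2" and "even r"
  shows "davenport_w (sq_set_star (p ^ r)) (p ^ r) \<le> 5"
proof -
  note p = assms(1,2)
  define m where "m = p^r"
  have p2: "p \<ge> 2" using p by (simp add: prime_ge_2_nat)
  have r1: "r \<ge> 1" using assms(3) by simp
  have m1: "m > 1" unfolding m_def by (rule one_less_power) (use p2 r1 in auto)
  have all: "has_wzs_subseq (sq_set_star m) m ys" if ys: "length ys = 5" "set ys \<subseteq> {..<m}" for ys
  proof (cases "\<exists>i<5. ys!i = 0")
    case True
    then obtain i where i: "i < 5" "ys!i = 0" by blast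
    have "1 \<in> sq_set_star m" unfolding sq_set_star_def sq_set_def using m1 by force
    thus ?thesis unfolding has_wzs_subseq_def
      apply (intro exI[of _ "{i}"] exI[of _ "\<lambda>_. 1"])
      using i ys by auto
  next
    case False
    have "\<forall>i. \<exists>w. i < 5 \<longrightarrow> ys!i = p^(fst w) * snd w \<and> \<not> p dvd snd w \<and> fst w < r"
    proof
      fix i show "\<exists>w. i < 5 \<longrightarrow> ys!i = p^(fst w) * snd w \<and> \<not> p dvd snd w \<and> fst w < r"
      proof (cases "i < 5")
        case True
        hence y0: "ys!i > 0" using False by auto
        have ym: "ys!i < m" using ys True by (metis lessThan_iff nth_mem subsetD)
        obtain v u where vu: "ys!i = p^v * u" "\<not> p dvd u" using decomp[OF p(1) y0] by blast
        have "u > 0" using vu y0 by (metis gr0I mult_0_right)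
        hence "p^v \<le> ys!i" using vu by simp
        hence "p^v < p^r" using ym unfolding m_def by simp
        hence "v < r" using p2 by (simp add: power_less_imp_less_exp)
        thus ?thesis using vu by (intro exI[of _ "(v,u)"]) simp
      qed simp
    qed
    then obtain f where f: "\<forall>i. i < 5 \<longrightarrow> ys!i = p^(fst (f i)) * snd (f i) \<and> \<not> p dvd snd (f i) \<and> fst (f i) < r"
      by (metis choice)
    define v where "v i = fst (f i)" for i
    define u where "u i = snd (f i)" for i
    have f': "\<forall>i<5. ys!i = p^(v i) * u i \<and> \<not> p dvd u i \<and> v i < r" using f unfolding v_def u_def by blast
    define E where "E = {i. i < 5 \<and> even (v i)}"
    define Od where "Od = {i. i < 5 \<and> odd (v i)}"
    have "E \<union> Od = {..<5}" "E \<inter> Od = {}" unfolding E_def Od_def by auto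
    hence "card E + card Od = 5" by (metis card_Un_disjoint card_lessThan finite_Un finite_lessThan)
    hence "card E \<ge> 3 \<or> card Od \<ge> 3" by linarith
    hence "\<exists>i j k. i < 5 \<and> j < 5 \<and> k < 5 \<and> i \<noteq> j \<and> i \<noteq> k \<and> j \<noteq> k \<and>
               even (v i) = even (v j) \<and> even (v i) = even (v k)"
    proof
      assume "card E \<ge> 3"
      from three_of_card[OF _ this] show ?thesis unfolding E_def by auto
    next
      assume "card Od \<ge> 3"
      from three_of_card[OF _ this] show ?thesis unfolding Od_def by auto
    qed
    then obtain i j k where ijk: "i < 5" "j < 5" "k < 5" "i \<noteq> j" "i \<noteq> k" "j \<noteq> k"
      "even (v i) = even (v j)" "even (v i) = even (v k)" by blast
    show ?thesis unfolding m_def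
      by (rule core3[OF p r1, of i ys j k v u]) (use ijk f' ys in auto)
  qed
  have "davenport_w (sq_set_star m) m \<le> 5" unfolding davenport_w_def
    by (rule Least_le) (use all in auto)
  thus ?thesis unfolding m_def .
qed
end
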